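(* Under the hypotheses and notation of the following setting — $X$ binary (values $x,x'$), $Y$ binary (values $y,y'$), $Z, C$ discrete with $Z\cup C$ containing no descendant of $X$, $P(c)>0$ — define $$L=\sum_z \max\{0,\ P(y_x\mid z,c)-P(y_{x'}\mid z,c),\ P(y\mid z,c)-P(y_{x'}\mid z,c),\ P(y_x\mid z,c)-P(y\mid z,c)\}P(z\mid c),$$ $$U=\sum_z \min\{P(y_x\mid z,c),\ P(y'_{x'}\mid z,c),\ P(y,x\mid z,c)+P(y',x'\mid z,c),\ P(y_x\mid z,c)-P(y_{x'}\mid z,c)+P(y,x'\mid z,c)+P(y',x\mid z,c)\}P(z\mid c),$$ $$L_0=\max\{0,\ P(y_x\mid c)-P(y_{x'}\mid c),\ P(y\mid c)-P(y_{x'}\mid c),\ P(y_x\mid c)-P(y\mid c)\},$$ $$U_0=\min\{P(y_x\mid c),\ P(y'_{x'}\mid c),\ P(y,x\mid c)+P(y',x'\mid c),\ P(y_x\mid c)-P(y_{x'}\mid c)+P(y,x'\mid c)+P(y',x\mid c)\}.$$ Then $L\ge L_0$ and $U\le U_0$. Consequently, for any $\beta,\gamma,\theta,\delta$, the interval for the benefit function $f(c)$ obtained from $(L,U)$ as in the statement "$W+\sigma L\le f(c)\le W+\sigma U$ if $\sigma>0$, $W+\sigma U\le f(c)\le W+\sigma L$ if $\sigma<0$" (with $\sigma=\beta-\gamma-\theta+\delta$, $W=(\gamma-\delta)P(y_x\mid c)+\delta P(y_{x'}\mid c)+\theta P(y'_{x'}\mid c)$) is contained in the interval obtained in the same way from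 $(L_0,U_0)$.
   Context: $Y_x$ denotes the counterfactual variable "the value $Y$ would take had $X$ been set to $x$" in a structural causal model; $y_x$ is the event $Y_x=y$. Unsubscripted probabilities such as $P(y\mid z,c)$, $P(y,x\mid c)$ are observational. Consistency: $X=x$ implies $Y_x=Y$. Sums over $z$ range over values of $Z$ with $P(z\mid c)>0$. The benefit function is $f(c)=\beta P(y_x,y'_{x'}\mid c)+\gamma P(y_x,y_{x'}\mid c)+\theta P(y'_x,y'_{x'}\mid c)+\delta P(y_{x'},y'_x\mid c)$. *)

theory Defs
  imports "HOL-Probability.Probability"
begin

text \<open>Population of units u drawn from a discrete distribution p.
  Binary X: x = True, x' = False.  Binary Y: y = True, y' = False.
  Yx u = Y_x(u), Yx' u = Y_{x'}(u) (counterfactual outcomes).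
  Z and C are not descendants of X, so they are not indexed by x.\<close>

definition Pr :: "'u pmf \<Rightarrow> ('u \<Rightarrow> bool) \<Rightarrow> real" where
  "Pr p A = measure_pmf.prob p {u. A u}"

definition cPr :: "'u pmf \<Rightarrow> ('u \<Rightarrow> bool) \<Rightarrow> ('u \<Rightarrow> bool) \<Rightarrow> real" where
  "cPr p A B = Pr p (\<lambda>u. A u \<and> B u) / Pr p B"

definition lowB :: "'u pmf \<Rightarrow> ('u \<Rightarrow> bool) \<Rightarrow> ('u \<Rightarrow> bool) \<Rightarrow> ('u \<Rightarrow> bool)
    \<Rightarrow> ('u \<Rightarrow> bool) \<Rightarrow> real" where
  "lowB p Y Yx Yx' B =
     max 0 (max (cPr p Yx B - cPr p Yx' B)
           (max (cPr p Y B - cPr p Yx' B) (cPr p Yx B - cPr p Y B)))"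

definition uppB :: "'u pmf \<Rightarrow> ('u \<Rightarrow> bool) \<Rightarrow> ('u \<Rightarrow> bool) \<Rightarrow> ('u \<Rightarrow> bool)
    \<Rightarrow> ('u \<Rightarrow> bool) \<Rightarrow> ('u \<Rightarrow> bool) \<Rightarrow> real" where
  "uppB p X Y Yx Yx' B =
     min (cPr p Yx B)
      (min (cPr p (\<lambda>u. \<not> Yx' u) B)
        (min (cPr p (\<lambda>u. Y u \<and> X u) B + cPr p (\<lambda>u. \<not> Y u \<and> \<not> X u) B)
             (cPr p Yx B - cPr p Yx' B + cPr p (\<lambda>u. Y u \<and> \<not> X u) B
                + cPr p (\<lambda>u. \<not> Y u \<and> X u) B)))"

definition Lz :: "'u pmf \<Rightarrow> ('u \<Rightarrow> bool) \<Rightarrow> ('u \<Rightarrow> bool) \<Rightarrow> ('u \<Rightarrow> bool)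
    \<Rightarrow> ('u \<Rightarrow> 'z) \<Rightarrow> ('u \<Rightarrow> 'c) \<Rightarrow> 'c \<Rightarrow> real" where
  "Lz p Y Yx Yx' Z C c =
     (\<Sum>\<^sub>\<infinity>z\<in>{z. cPr p (\<lambda>u. Z u = z) (\<lambda>u. C u = c) > 0}.
        lowB p Y Yx Yx' (\<lambda>u. Z u = z \<and> C u = c) * cPr p (\<lambda>u. Z u = z) (\<lambda>u. C u = c))"

definition Uz :: "'u pmf \<Rightarrow> ('u \<Rightarrow> bool) \<Rightarrow> ('u \<Rightarrow> bool) \<Rightarrow> ('u \<Rightarrow> bool) \<Rightarrow> ('u \<Rightarrow> bool)
    \<Rightarrow> ('u \<Rightarrow> 'z) \<Rightarrow> ('u \<Rightarrow> 'c) \<Rightarrow> 'c \<Rightarrow> real" where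
  "Uz p X Y Yx Yx' Z C c =
     (\<Sum>\<^sub>\<infinity>z\<in>{z. cPr p (\<lambda>u. Z u = z) (\<lambda>u. C u = c) > 0}.
        uppB p X Y Yx Yx' (\<lambda>u. Z u = z \<and> C u = c) * cPr p (\<lambda>u. Z u = z) (\<lambda>u. C u = c))"

end

theory Submission
  imports Defs
begin
lemma sumZ:
  fixes p :: "'u pmf" and Z :: "'u \<Rightarrow> 'z" and B :: "'u \<Rightarrow> bool"
  shows "((\<lambda>z. Pr p (\<lambda>u. A u \<and> (Z u = z \<and> B u))) has_sum Pr p (\<lambda>u. A u \<and> B u)) UNIV"
proof -
  define q where "q = map_pmf (\<lambda>u. (A u \<and> B u, Z u)) p"
  have e: "Pr p (\<lambda>u. A u \<and> (Z u = z \<and> B u)) = pmf q (True, z)" for z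
    unfolding q_def pmf_map Pr_def by (rule arg_cong[where f="measure_pmf.prob p"]) auto
  have "(pmf q has_sum measure_pmf.prob q (Pair True ` UNIV)) (Pair True ` UNIV)"
    by (metis measure_pmf_conv_infsetsum pmf_abs_summable abs_summable_equivalent
        abs_summable_summable has_sum_infsum infsetsum_infsum)
  hence "((pmf q \<circ> Pair True) has_sum measure_pmf.prob q (Pair True ` UNIV)) UNIV"
    by (subst (asm) has_sum_reindex) (auto simp: inj_on_def)
  moreover have "measure_pmf.prob q (Pair True ` UNIV) = Pr p (\<lambda>u. A u \<and> B u)"
    unfolding q_def Pr_def measure_map_pmf by (rule arg_cong[where f="measure_pmf.prob p"]) auto
  ultimately show ?thesis by (simp add: e o_def)
qed

lemma Pr_mono: "(\<And>u. A u \<Longrightarrow> B u) \<Longrightarrow> Pr p A \<le> Pr p B"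
  unfolding Pr_def by (rule measure_pmf.finite_measure_mono) auto

lemma Pr_nonneg: "Pr p A \<ge> 0" unfolding Pr_def by simp

lemma cPr_bounds: "0 \<le> cPr p A B" "cPr p A B \<le> 1"
proof -
  show "0 \<le> cPr p A B" unfolding cPr_def by (simp add: Pr_nonneg)
  have "Pr p (\<lambda>u. A u \<and> B u) \<le> Pr p B" by (rule Pr_mono) auto
  thus "cPr p A B \<le> 1" unfolding cPr_def
    using Pr_nonneg[of p B] by (cases "Pr p B = 0") (auto simp: divide_le_eq_1)
qed

lemma has_sum_diff':
  fixes f g :: "'a \<Rightarrow> real"
  shows "(f has_sum a) S \<Longrightarrow> (g has_sum b) S \<Longrightarrow> ((\<lambda>x. f x - g x) has_sum (a - b)) S"
proof -
  assume a: "(f has_sum a) S" and b: "(g has_sum b) S"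
  have "((\<lambda>x. f x + (-1) * g x) has_sum (a + (-1) * b)) S"
    by (rule has_sum_add[OF a has_sum_cmult_right[OF b]])
  thus ?thesis by simp
qed

lemma sumZc:
  fixes p :: "'u pmf" and Z :: "'u \<Rightarrow> 'z" and C :: "'u \<Rightarrow> 'c"
  assumes pos: "Pr p (\<lambda>u. C u = c) > 0"
  shows "((\<lambda>z. cPr p A (\<lambda>u. Z u = z \<and> C u = c) * cPr p (\<lambda>u. Z u = z) (\<lambda>u. C u = c))
     has_sum cPr p A (\<lambda>u. C u = c)) {z. cPr p (\<lambda>u. Z u = z) (\<lambda>u. C u = c) > 0}"
proof -
  define D where "D = Pr p (\<lambda>u. C u = c)"
  have eq: "cPr p A (\<lambda>u. Z u = z \<and> C u = c) * cPr p (\<lambda>u. Z u = z) (\<lambda>u. C u = c)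
      = Pr p (\<lambda>u. A u \<and> (Z u = z \<and> C u = c)) / D" for z
  proof (cases "Pr p (\<lambda>u. Z u = z \<and> C u = c) = 0")
    case True
    have "Pr p (\<lambda>u. A u \<and> (Z u = z \<and> C u = c)) \<le> Pr p (\<lambda>u. Z u = z \<and> C u = c)"
      by (rule Pr_mono) auto
    with True Pr_nonneg[of p "\<lambda>u. A u \<and> (Z u = z \<and> C u = c)"]
    have "Pr p (\<lambda>u. A u \<and> (Z u = z \<and> C u = c)) = 0" by linarith
    thus ?thesis using True by (simp add: cPr_def)
  next
    case False
    thus ?thesis by (simp add: cPr_def D_def)
  qed
  have h: "((\<lambda>z. Pr p (\<lambda>u. A u \<and> (Z u = z \<and> C u = c)) / D) has_sum cPr p A (\<lambda>u. C u = c)) UNIV"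
    unfolding cPr_def D_def by (rule has_sum_divide_const, rule sumZ)
  show ?thesis
  proof (subst has_sum_cong_neutral[where T=UNIV and g="\<lambda>z. Pr p (\<lambda>u. A u \<and> (Z u = z \<and> C u = c)) / D"])
    fix z assume z: "z \<in> UNIV - {z. cPr p (\<lambda>u. Z u = z) (\<lambda>u. C u = c) > 0}"
    have "cPr p (\<lambda>u. Z u = z) (\<lambda>u. C u = c) = 0" using z cPr_bounds(1)[of p "\<lambda>u. Z u = z" "\<lambda>u. C u = c"] by auto
    hence "cPr p A (\<lambda>u. Z u = z \<and> C u = c) * cPr p (\<lambda>u. Z u = z) (\<lambda>u. C u = c) = 0" by simp
    thus "Pr p (\<lambda>u. A u \<and> (Z u = z \<and> C u = c)) / D = 0" using eq by simp
  qed (use eq h in auto)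
qed

theorem mainTheorem2:
  fixes p :: "'u pmf"
    and X Y Yx Yx' :: "'u \<Rightarrow> bool"
    and Z :: "'u \<Rightarrow> 'z" and C :: "'u \<Rightarrow> 'c" and c :: 'c
  assumes consistency_x: "\<And>u. X u \<Longrightarrow> Y u = Yx u"
    and consistency_x': "\<And>u. \<not> X u \<Longrightarrow> Y u = Yx' u"
    and Pc_pos: "Pr p (\<lambda>u. C u = c) > 0"
  defines "L \<equiv> Lz p Y Yx Yx' Z C c"
    and "U \<equiv> Uz p X Y Yx Yx' Z C c"
    and "L0 \<equiv> lowB p Y Yx Yx' (\<lambda>u. C u = c)"
    and "U0 \<equiv> uppB p X Y Yx Yx' (\<lambda>u. C u = c)"
  shows "L \<ge> L0 \<and> U \<le> U0 \<and>
    (\<forall>\<beta> \<gamma> \<theta> \<delta> :: real.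
       let \<sigma> = \<beta> - \<gamma> - \<theta> + \<delta>;
           W = (\<gamma> - \<delta>) * cPr p Yx (\<lambda>u. C u = c) + \<delta> * cPr p Yx' (\<lambda>u. C u = c)
               + \<theta> * cPr p (\<lambda>u. \<not> Yx' u) (\<lambda>u. C u = c)
       in (\<sigma> > 0 \<longrightarrow> {W + \<sigma> * L .. W + \<sigma> * U} \<subseteq> {W + \<sigma> * L0 .. W + \<sigma> * U0})
        \<and> (\<sigma> < 0 \<longrightarrow> {W + \<sigma> * U .. W + \<sigma> * L} \<subseteq> {W + \<sigma> * U0 .. W + \<sigma> * L0}))"
proof -
  define S where "S = {z. cPr p (\<lambda>u. Z u = z) (\<lambda>u. C u = c) > 0}"
  define B where "B z = (\<lambda>u. Z u = z \<and> C u = c)" for z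
  define w where "w z = cPr p (\<lambda>u. Z u = z) (\<lambda>u. C u = c)" for z
  define Cc where "Cc = (\<lambda>u. C u = c)"
  have T: "\<And>A. ((\<lambda>z. cPr p A (B z) * w z) has_sum cPr p A Cc) S"
    using sumZc[OF Pc_pos] unfolding S_def B_def w_def Cc_def by blast
  have wnn: "w z \<ge> 0" for z unfolding w_def by (rule cPr_bounds)
  have wS: "z \<in> S \<Longrightarrow> cPr p (\<lambda>u. True) (B z) = 1" for z
  proof -
    assume "z \<in> S"
    hence "Pr p (\<lambda>u. Z u = z \<and> C u = c) \<noteq> 0" by (auto simp: S_def cPr_def)
    thus ?thesis by (simp add: cPr_def B_def)
  qed
  have wsum: "(w has_sum cPr p (\<lambda>u. True) Cc) S"
    using T[of "\<lambda>u. True"] by (rule has_sum_cong[THEN iffD1, rotated]) (simp add: wS)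
  hence wsm: "w summable_on S" by (rule has_sum_imp_summable)
  have cb: "\<And>A z. 0 \<le> cPr p A (B z)" "\<And>A z. cPr p A (B z) \<le> 1" by (rule cPr_bounds)+
  define fL where "fL z = lowB p Y Yx Yx' (B z) * w z" for z
  have Ldef: "L = infsum fL S" unfolding L_def Lz_def fL_def S_def B_def w_def by simp
  have lb: "0 \<le> lowB p Y Yx Yx' (B z) \<and> lowB p Y Yx Yx' (B z) \<le> 1" for z
    using cb[of Yx z] cb[of Yx' z] cb[of Y z] unfolding lowB_def by auto
  have fLs: "fL summable_on S"
  proof (rule summable_on_comparison_test[OF wsm])
    fix z show "fL z \<le> w z" "0 \<le> fL z" using lb[of z] wnn[of z] unfolding fL_def
      by (auto intro: mult_left_le_one_le)
  qed
  hence hL: "(fL has_sum L) S" unfolding Ldef by simp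
  have lowm: "\<And>g a. (g has_sum a) S \<Longrightarrow> (\<And>z. z \<in> S \<Longrightarrow> g z \<le> fL z) \<Longrightarrow> a \<le> L"
    using hL has_sum_mono by blast
  have l1: "0 \<le> L"
    by (rule lowm[of "\<lambda>_. 0"]) (auto simp: fL_def lb wnn)
  have l2: "cPr p Yx Cc - cPr p Yx' Cc \<le> L"
  proof (rule lowm[OF has_sum_diff'[OF T T]])
    fix z have "(cPr p Yx (B z) - cPr p Yx' (B z)) * w z \<le> fL z"
      unfolding fL_def by (rule mult_right_mono[OF _ wnn]) (simp add: lowB_def)
    thus "cPr p Yx (B z) * w z - cPr p Yx' (B z) * w z \<le> fL z" by (simp add: left_diff_distrib)
  qed
  have l3: "cPr p Y Cc - cPr p Yx' Cc \<le> L"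
  proof (rule lowm[OF has_sum_diff'[OF T T]])
    fix z have "(cPr p Y (B z) - cPr p Yx' (B z)) * w z \<le> fL z"
      unfolding fL_def by (rule mult_right_mono[OF _ wnn]) (simp add: lowB_def)
    thus "cPr p Y (B z) * w z - cPr p Yx' (B z) * w z \<le> fL z" by (simp add: left_diff_distrib)
  qed
  have l4: "cPr p Yx Cc - cPr p Y Cc \<le> L"
  proof (rule lowm[OF has_sum_diff'[OF T T]])
    fix z have "(cPr p Yx (B z) - cPr p Y (B z)) * w z \<le> fL z"
      unfolding fL_def by (rule mult_right_mono[OF _ wnn]) (simp add: lowB_def)
    thus "cPr p Yx (B z) * w z - cPr p Y (B z) * w z \<le> fL z" by (simp add: left_diff_distrib)
  qed
  have LL: "L0 \<le> L" unfolding L0_def lowB_def using l1 l2 l3 l4 by (simp add: Cc_def)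
  define fU where "fU z = uppB p X Y Yx Yx' (B z) * w z" for z
  have Udef: "U = infsum fU S" unfolding U_def Uz_def fU_def S_def B_def w_def by simp
  have ub: "-1 \<le> uppB p X Y Yx Yx' (B z) \<and> uppB p X Y Yx Yx' (B z) \<le> 1" for z
    using cb[of Yx z] cb[of Yx' z] cb[of "\<lambda>u. \<not> Yx' u" z] cb[of "\<lambda>u. Y u \<and> X u" z]
      cb[of "\<lambda>u. \<not> Y u \<and> \<not> X u" z] cb[of "\<lambda>u. Y u \<and> \<not> X u" z] cb[of "\<lambda>u. \<not> Y u \<and> X u" z]
    unfolding uppB_def by (auto simp: min_le_iff_disj)
  have fUs: "fU summable_on S"
  proof (rule Infinite_Sum.abs_summable_summable, rule Infinite_Sum.abs_summable_on_comparison_test'[OF wsm])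
    fix z show "norm (fU z) \<le> w z" using ub[of z] wnn[of z] unfolding fU_def
      by (auto simp: abs_mult intro: mult_left_le_one_le)
  qed
  hence hU: "(fU has_sum U) S" unfolding Udef by simp
  have upm: "\<And>g a. (g has_sum a) S \<Longrightarrow> (\<And>z. z \<in> S \<Longrightarrow> fU z \<le> g z) \<Longrightarrow> U \<le> a"
    using hU has_sum_mono by blast
  have u1: "U \<le> cPr p Yx Cc"
    by (rule upm[OF T]) (auto simp: fU_def uppB_def intro!: mult_right_mono wnn)
  have u2: "U \<le> cPr p (\<lambda>u. \<not> Yx' u) Cc"
    by (rule upm[OF T]) (auto simp: fU_def uppB_def intro!: mult_right_mono wnn)
  have u3: "U \<le> cPr p (\<lambda>u. Y u \<and> X u) Cc + cPr p (\<lambda>u. \<not> Y u \<and> \<not> X u) Cc"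
  proof (rule upm[OF has_sum_add[OF T T]])
    fix z have "fU z \<le> (cPr p (\<lambda>u. Y u \<and> X u) (B z) + cPr p (\<lambda>u. \<not> Y u \<and> \<not> X u) (B z)) * w z"
      unfolding fU_def by (rule mult_right_mono[OF _ wnn]) (simp add: uppB_def)
    thus "fU z \<le> cPr p (\<lambda>u. Y u \<and> X u) (B z) * w z + cPr p (\<lambda>u. \<not> Y u \<and> \<not> X u) (B z) * w z"
      by (simp add: distrib_right)
  qed
  have u4: "U \<le> cPr p Yx Cc - cPr p Yx' Cc + cPr p (\<lambda>u. Y u \<and> \<not> X u) Cc + cPr p (\<lambda>u. \<not> Y u \<and> X u) Cc"
  proof (rule upm[OF has_sum_add[OF has_sum_add[OF has_sum_diff'[OF T T] T] T]])
    fix z have "fU z \<le> (cPr p Yx (B z) - cPr p Yx' (B z) + cPr p (\<lambda>u. Y u \<and> \<not> X u) (B z)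
        + cPr p (\<lambda>u. \<not> Y u \<and> X u) (B z)) * w z"
      unfolding fU_def by (rule mult_right_mono[OF _ wnn]) (simp add: uppB_def)
    thus "fU z \<le> cPr p Yx (B z) * w z - cPr p Yx' (B z) * w z + cPr p (\<lambda>u. Y u \<and> \<not> X u) (B z) * w z
        + cPr p (\<lambda>u. \<not> Y u \<and> X u) (B z) * w z"
      by (simp add: distrib_right left_diff_distrib)
  qed
  have UU: "U \<le> U0" unfolding U0_def uppB_def using u1 u2 u3 u4 by (simp add: Cc_def)
  show ?thesis
  proof (intro conjI LL UU allI)
    fix \<beta> \<gamma> \<theta> \<delta> :: real
    define s where "s = \<beta> - \<gamma> - \<theta> + \<delta>"
    have a: "s > 0 \<Longrightarrow> s * L0 \<le> s * L \<and> s * U \<le> s * U0"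
      using LL UU by (auto intro: mult_left_mono)
    have b: "s < 0 \<Longrightarrow> s * L \<le> s * L0 \<and> s * U0 \<le> s * U"
      using LL UU by (auto intro: mult_left_mono_neg)
    show "let \<sigma> = \<beta> - \<gamma> - \<theta> + \<delta>;
           W = (\<gamma> - \<delta>) * cPr p Yx (\<lambda>u. C u = c) + \<delta> * cPr p Yx' (\<lambda>u. C u = c)
               + \<theta> * cPr p (\<lambda>u. \<not> Yx' u) (\<lambda>u. C u = c)
       in (\<sigma> > 0 \<longrightarrow> {W + \<sigma> * L .. W + \<sigma> * U} \<subseteq> {W + \<sigma> * L0 .. W + \<sigma> * U0})
        \<and> (\<sigma> < 0 \<longrightarrow> {W + \<sigma> * U .. W + \<sigma> * L} \<subseteq> {W + \<sigma> * U0 .. W + \<sigma> * L0})"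
      unfolding Let_def s_def[symmetric] using a b by auto
  qed
qed
end
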